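(* Let $A$ be a symmetric general metric space, i.e. $A(x,y)=A(y,x)$ for all $x,y$. Then: (1) every flat filter on $A$ is Cauchy; (2) for every Cauchy filter $\mathcal F$, the maps $x\mapsto\lim^+_{y\in\mathcal F}A(x,y)$ and $x\mapsto\lim^+_{y\in\mathcal F}A(y,x)$ coincide; (3) every left adjoint left module on $A$ has the same underlying map as its right adjoint; (4) every $\mathcal P_2$-flat left module on $A$ is a left adjoint module; (5) a Cauchy filter on $A$ is closed if and only if it is a minimal Cauchy filter (minimal for inclusion among Cauchy filters); (6) the preorder of closed flat filters on $A$ ordered by reverse inclusion is discrete (no two distinct comparable elements).
   Context: A general metric space $A$ is a set with $A(-,-):A\times A\to[0,\infty]$, $A(x,x)=0$, $A(x,z)\le A(x,y)+A(y,z)$. Internal hom on $[0,\infty]$: $[x,y]=\max(y-x,0)$ for finite $x,y$, $[x,\infty]=\infty$ for $x<\infty$, $[\infty,y]=0$. A left module is $M:A\to[0,\infty]$ with $M(x)\le M(y)+A(x,y)$; a right module is $N$ with $N(y)\le A(x,y)+N(x)$. A left module $M$ is a left adjoint with right adjoint the right module $N$ iff $\inf_x(M(x)+N(x))=0$ and $M(x)+N(y)\ge A(x,y)$ for all $x,y$. $M$ is $\mathcal P_2$-flat iff (F2) for every finite (possibly empty) family $(N_i)$ of right modules, $\inf_x(M(x)+\max_iN_i(x))=\max_i\inf_x(M(x)+N_i(x))$ (empty max $=0$), and (F3) for all $v\in[0,\infty]$ and right modules $N$, $\inf_x(M(x)+[v,N(x)])=[v,\inf_x(M(x)+N(x))]$.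 A filter on $A$ is a nonempty set of nonempty subsets closed under finite intersections and supersets; $\lim^+_{\mathcal F}t=\inf_{f\in\mathcal F}\sup_{x\in f}t(x)$, $\lim^-_{\mathcal F}t=\sup_{f\in\mathcal F}\inf_{x\in f}t(x)$, $M^-(\mathcal F)(x)=\lim^-_{y\in\mathcal F}A(x,y)$. Cauchy: $\inf_{f}\sup_{x,y\in f}A(x,y)=0$. Weakly flat: $\lim^+_{\mathcal F}M^-(\mathcal F)=0$. Flat: for every $\epsilon>0$ there is $f\in\mathcal F$ such that for every finite family $x_1,\dots,x_n\in f$ and every $g\in\mathcal F$ there is $y\in g$ with $A(x_i,y)\le\epsilon$ for all $i$. A weakly flat filter $\mathcal F$ is closed iff for every $f\in\mathcal F$ there is $\epsilon>0$ with $\{x:M^-(\mathcal F)(x)\le\epsilon\}\subseteq f$. *)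

theory Defs
  imports "HOL-Analysis.Analysis" "HOL-Library.Extended_Nonnegative_Real"
begin

definition gms :: "('a \<Rightarrow> 'a \<Rightarrow> ennreal) \<Rightarrow> bool" where
  "gms A \<longleftrightarrow> (\<forall>x. A x x = 0) \<and> (\<forall>x y z. A x z \<le> A x y + A y z)"

definition symmetric_gms :: "('a \<Rightarrow> 'a \<Rightarrow> ennreal) \<Rightarrow> bool" where
  "symmetric_gms A \<longleftrightarrow> (\<forall>x y. A x y = A y x)"

definition ihom :: "ennreal \<Rightarrow> ennreal \<Rightarrow> ennreal" where
  "ihom v y = (if v = \<infinity> then 0 else y - v)"

definition left_module :: "('a \<Rightarrow> 'a \<Rightarrow> ennreal) \<Rightarrow> ('a \<Rightarrow> ennreal) \<Rightarrow> bool" where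
  "left_module A M \<longleftrightarrow> (\<forall>x y. M x \<le> M y + A x y)"

definition right_module :: "('a \<Rightarrow> 'a \<Rightarrow> ennreal) \<Rightarrow> ('a \<Rightarrow> ennreal) \<Rightarrow> bool" where
  "right_module A N \<longleftrightarrow> (\<forall>x y. N y \<le> A x y + N x)"

definition adjoint_pair :: "('a \<Rightarrow> 'a \<Rightarrow> ennreal) \<Rightarrow> ('a \<Rightarrow> ennreal) \<Rightarrow> ('a \<Rightarrow> ennreal) \<Rightarrow> bool" where
  "adjoint_pair A M N \<longleftrightarrow> left_module A M \<and> right_module A N \<and>
     (INF x. M x + N x) = 0 \<and> (\<forall>x y. A x y \<le> M x + N y)"

definition left_adjoint_module :: "('a \<Rightarrow> 'a \<Rightarrow> ennreal) \<Rightarrow> ('a \<Rightarrow> ennreal) \<Rightarrow> bool" where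
  "left_adjoint_module A M \<longleftrightarrow> left_module A M \<and> (\<exists>N. adjoint_pair A M N)"

text \<open>P_2-flatness; a finite family of right modules is represented by a finite set of them
  (the maximum does not see repetitions); the empty maximum is 0.\<close>
definition P2_flat :: "('a \<Rightarrow> 'a \<Rightarrow> ennreal) \<Rightarrow> ('a \<Rightarrow> ennreal) \<Rightarrow> bool" where
  "P2_flat A M \<longleftrightarrow> left_module A M \<and>
     (\<forall>S. finite S \<and> (\<forall>N\<in>S. right_module A N) \<longrightarrow>
        (INF x. M x + (SUP N\<in>S. N x)) = (SUP N\<in>S. INF x. M x + N x)) \<and>
     (\<forall>v N. right_module A N \<longrightarrow>
        (INF x. M x + ihom v (N x)) = ihom v (INF x. M x + N x))"

text \<open>Filters: proper Isabelle filters (F \<noteq> bot). A set f belongs to the filter iff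
  eventually (\<lambda>x. x \<in> f) F. lim^+ is Limsup, lim^- is Liminf.\<close>

definition Mminus :: "('a \<Rightarrow> 'a \<Rightarrow> ennreal) \<Rightarrow> 'a filter \<Rightarrow> 'a \<Rightarrow> ennreal" where
  "Mminus A F x = Liminf F (\<lambda>y. A x y)"

definition gms_cauchy_filter :: "('a \<Rightarrow> 'a \<Rightarrow> ennreal) \<Rightarrow> 'a filter \<Rightarrow> bool" where
  "gms_cauchy_filter A F \<longleftrightarrow> F \<noteq> bot \<and>
     (INF P\<in>{P. eventually P F}. SUP x\<in>Collect P. SUP y\<in>Collect P. A x y) = 0"

definition weakly_flat_filter :: "('a \<Rightarrow> 'a \<Rightarrow> ennreal) \<Rightarrow> 'a filter \<Rightarrow> bool" where
  "weakly_flat_filter A F \<longleftrightarrow> F \<noteq> bot \<and> Limsup F (Mminus A F) = 0"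

definition flat_filter :: "('a \<Rightarrow> 'a \<Rightarrow> ennreal) \<Rightarrow> 'a filter \<Rightarrow> bool" where
  "flat_filter A F \<longleftrightarrow> F \<noteq> bot \<and>
     (\<forall>\<epsilon>::real. \<epsilon> > 0 \<longrightarrow> (\<exists>P. eventually P F \<and>
        (\<forall>xs. finite xs \<and> xs \<subseteq> Collect P \<longrightarrow>
          (\<forall>Q. eventually Q F \<longrightarrow> (\<exists>y. Q y \<and> (\<forall>x\<in>xs. A x y \<le> ennreal \<epsilon>))))))"

definition closed_filter :: "('a \<Rightarrow> 'a \<Rightarrow> ennreal) \<Rightarrow> 'a filter \<Rightarrow> bool" where
  "closed_filter A F \<longleftrightarrow> weakly_flat_filter A F \<and>
     (\<forall>P. eventually P F \<longrightarrow> (\<exists>\<epsilon>::real. \<epsilon> > 0 \<and> {x. Mminus A F x \<le> ennreal \<epsilon>} \<subseteq> Collect P))"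

text \<open>Set inclusion of filters G \<subseteq> F (as sets of subsets) is F \<le> G in Isabelle's order.\<close>
definition minimal_cauchy_filter :: "('a \<Rightarrow> 'a \<Rightarrow> ennreal) \<Rightarrow> 'a filter \<Rightarrow> bool" where
  "minimal_cauchy_filter A F \<longleftrightarrow> gms_cauchy_filter A F \<and>
     (\<forall>G. gms_cauchy_filter A G \<and> F \<le> G \<longrightarrow> G = F)"

end

theory Submission
  imports Defs
begin


lemma eps_zero: fixes x :: ennreal assumes "\<And>e::real. 0 < e \<Longrightarrow> x \<le> ennreal e" shows "x = 0"
proof -
  have "x \<le> 0" by (rule ennreal_le_epsilon) (use assms in simp)
  then show ?thesis by simp
qed

lemma cauchy_iff:
  "gms_cauchy_filter A F \<longleftrightarrow> F \<noteq> bot \<and>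
    (\<forall>e::real. e > 0 \<longrightarrow> (\<exists>P. eventually P F \<and> (\<forall>x y. P x \<longrightarrow> P y \<longrightarrow> A x y \<le> ennreal e)))"
proof
  assume c: "gms_cauchy_filter A F"
  show "F \<noteq> bot \<and> (\<forall>e::real. e > 0 \<longrightarrow> (\<exists>P. eventually P F \<and> (\<forall>x y. P x \<longrightarrow> P y \<longrightarrow> A x y \<le> ennreal e)))"
  proof (intro conjI allI impI)
    show "F \<noteq> bot" using c unfolding gms_cauchy_filter_def by simp
    fix e :: real assume "e > 0"
    then have "(INF P\<in>{P. eventually P F}. SUP x\<in>Collect P. SUP y\<in>Collect P. A x y) < ennreal e"
      using c unfolding gms_cauchy_filter_def by simp
    then have "\<exists>P\<in>{P. eventually P F}. (SUP x\<in>Collect P. SUP y\<in>Collect P. A x y) < ennreal e"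
      by (simp only: INF_less_iff)
    then obtain P where P0: "P \<in> {P. eventually P F}" and P2: "(SUP x\<in>Collect P. SUP y\<in>Collect P. A x y) < ennreal e"
      by (rule bexE)
    from P0 have P1: "eventually P F" by simp
    note P = P1 P2
    have "\<forall>x y. P x \<longrightarrow> P y \<longrightarrow> A x y \<le> ennreal e"
    proof (intro allI impI)
      fix x y assume "P x" "P y"
      have "A x y \<le> (SUP y\<in>Collect P. A x y)" by (rule SUP_upper) (simp add: \<open>P y\<close>)
      also have "\<dots> \<le> (SUP x\<in>Collect P. SUP y\<in>Collect P. A x y)"
        by (rule SUP_upper[where f="\<lambda>x. SUP y\<in>Collect P. A x y"]) (simp add: \<open>P x\<close>)
      finally have "A x y \<le> (SUP x\<in>Collect P. SUP y\<in>Collect P. A x y)" .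
      then show "A x y \<le> ennreal e" using P(2) by (rule order.strict_trans1[THEN less_imp_le])
    qed
    then show "\<exists>P. eventually P F \<and> (\<forall>x y. P x \<longrightarrow> P y \<longrightarrow> A x y \<le> ennreal e)" using P by blast
  qed
next
  assume h: "F \<noteq> bot \<and> (\<forall>e::real. e > 0 \<longrightarrow> (\<exists>P. eventually P F \<and> (\<forall>x y. P x \<longrightarrow> P y \<longrightarrow> A x y \<le> ennreal e)))"
  have "(INF P\<in>{P. eventually P F}. SUP x\<in>Collect P. SUP y\<in>Collect P. A x y) = 0"
  proof (rule eps_zero)
    fix e :: real assume "e > 0"
    have "\<exists>P. eventually P F \<and> (\<forall>x y. P x \<longrightarrow> P y \<longrightarrow> A x y \<le> ennreal e)"
      using h[THEN conjunct2, rule_format, OF \<open>e > 0\<close>] .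
    then obtain P where P: "eventually P F" "\<forall>x y. P x \<longrightarrow> P y \<longrightarrow> A x y \<le> ennreal e" by (elim exE conjE)
    have Sle: "(SUP x\<in>Collect P. SUP y\<in>Collect P. A x y) \<le> ennreal e"
      by (intro SUP_least) (simp add: P(2))
    show "(INF P\<in>{P. eventually P F}. SUP x\<in>Collect P. SUP y\<in>Collect P. A x y) \<le> ennreal e"
      by (rule INF_lower2[of P]) (simp_all add: P(1) Sle)
  qed
  then show "gms_cauchy_filter A F" using h unfolding gms_cauchy_filter_def by simp
qed

lemma half_sum: "0 < (e::real) \<Longrightarrow> ennreal (e/2) + ennreal (e/2) = ennreal e"
  by (simp flip: ennreal_plus)

lemma flat_cauchy:
  assumes g: "gms A" and s: "symmetric_gms A" and f: "flat_filter A F"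
  shows "gms_cauchy_filter A F"
  unfolding cauchy_iff
proof (intro conjI allI impI)
  show "F \<noteq> bot" using f unfolding flat_filter_def by simp
  fix e :: real assume e: "e > 0"
  obtain P where P: "eventually P F" "\<forall>xs. finite xs \<and> xs \<subseteq> Collect P \<longrightarrow>
          (\<forall>Q. eventually Q F \<longrightarrow> (\<exists>y. Q y \<and> (\<forall>x\<in>xs. A x y \<le> ennreal (e/2))))"
  proof -
    have "e/2 > 0" using e by simp
    from f[unfolded flat_filter_def, THEN conjunct2, rule_format, OF this] show ?thesis by (elim exE conjE) (rule that)
  qed
  have "\<forall>x z. P x \<longrightarrow> P z \<longrightarrow> A x z \<le> ennreal e"
  proof (intro allI impI)
    fix x z assume "P x" "P z"
    then obtain y where y: "A x y \<le> ennreal (e/2)" "A z y \<le> ennreal (e/2)"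
      using P(2)[rule_format, of "{x,z}" "\<lambda>_. True"] by auto
    have "A x z \<le> A x y + A y z" using g unfolding gms_def by blast
    also have "\<dots> = A x y + A z y" using s unfolding symmetric_gms_def by metis
    also have "\<dots> \<le> ennreal (e/2) + ennreal (e/2)" using y by (rule add_mono)
    finally show "A x z \<le> ennreal e" using half_sum[OF e] by simp
  qed
  then show "\<exists>P. eventually P F \<and> (\<forall>x y. P x \<longrightarrow> P y \<longrightarrow> A x y \<le> ennreal e)" using P(1) by blast
qed

lemma adj_le:
  assumes g: "gms A" and s: "symmetric_gms A" and a: "adjoint_pair A M N"
  shows "M x \<le> N x"
proof (rule ennreal_le_epsilon)
  fix e :: real assume e: "0 < e"
  have "(INF x. M x + N x) < ennreal (e/2)" using a e unfolding adjoint_pair_def by simp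
  then have "\<exists>z\<in>UNIV. M z + N z < ennreal (e/2)" by (simp only: INF_less_iff)
  then obtain z where z: "M z + N z < ennreal (e/2)" by blast
  have "M z \<le> M z + N z" by (rule add_increasing2) simp_all
  then have Mz: "M z \<le> ennreal (e/2)" using z by (rule order.strict_trans1[THEN less_imp_le])
  have h1: "M x \<le> M z + A x z" using a unfolding adjoint_pair_def left_module_def by blast
  have h2: "A x z = A z x" using s unfolding symmetric_gms_def by blast
  have h3: "A z x \<le> M z + N x" using a unfolding adjoint_pair_def by blast
  have h1': "M x \<le> M z + A z x" using h1 h2 by simp
  have "M x \<le> M z + (M z + N x)" using order.trans[OF h1' add_left_mono[OF h3]] .
  also have "\<dots> = N x + (M z + M z)" by (simp add: ac_simps)
  also have "\<dots> \<le> N x + (ennreal (e/2) + ennreal (e/2))" using add_mono[OF Mz Mz] by (rule add_left_mono)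
  also have "\<dots> = N x + ennreal e" using half_sum[OF e] by simp
  finally show "M x \<le> N x + ennreal e" .
qed

lemma adj_eq:
  assumes g: "gms A" and s: "symmetric_gms A" and a: "adjoint_pair A M N"
  shows "M = N"
proof -
  have a2: "adjoint_pair A N M"
  proof -
    have sy: "\<And>x y. A x y = A y x" using s unfolding symmetric_gms_def by blast
    have lm: "\<forall>x y. M x \<le> M y + A x y" and rm: "\<forall>x y. N y \<le> A x y + N x"
      and i0: "(INF x. M x + N x) = 0" and t: "\<forall>x y. A x y \<le> M x + N y"
      using a unfolding adjoint_pair_def right_module_def left_module_def by auto
    have "left_module A N" unfolding left_module_def
    proof (intro allI)
      fix x y have "N x \<le> A y x + N y" using rm by blast
      then show "N x \<le> N y + A x y" using sy[of y x] by (simp add: add.commute)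
    qed
    moreover have "right_module A M" unfolding right_module_def
    proof (intro allI)
      fix x y have "M y \<le> M x + A y x" using lm by blast
      then show "M y \<le> A x y + M x" using sy[of y x] by (simp add: add.commute)
    qed
    moreover have "(INF x. N x + M x) = 0" using i0 by (simp add: add.commute)
    moreover have "\<forall>x y. A x y \<le> N x + M y"
    proof (intro allI)
      fix x y have "A y x \<le> M y + N x" using t by blast
      then show "A x y \<le> N x + M y" using sy[of y x] by (simp add: add.commute)
    qed
    ultimately show ?thesis unfolding adjoint_pair_def by blast
  qed
  show ?thesis using adj_le[OF g s a] adj_le[OF g s a2] by (auto intro: antisym)
qed



lemma rm_dist:
  assumes g: "gms A" and s: "symmetric_gms A"
  shows "right_module A (\<lambda>x. A x c)"
  unfolding right_module_def
proof (intro allI)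
  fix x y
  have "A y c \<le> A y x + A x c" using g unfolding gms_def by blast
  then show "A y c \<le> A x y + A x c" using s unfolding symmetric_gms_def by metis
qed

lemma ennreal_sub_aux: "(c + d) - v \<le> c + (d - (v::ennreal))"
  by (simp add: add_diff_le_ennreal)

lemma rm_ihom:
  assumes "right_module A N"
  shows "right_module A (\<lambda>x. ihom v (N x))"
  unfolding right_module_def ihom_def
proof (intro allI)
  fix x y
  show "(if v = \<infinity> then 0 else N y - v) \<le> A x y + (if v = \<infinity> then 0 else N x - v)"
  proof (cases "v = \<infinity>")
    case False
    have "N y - v \<le> (A x y + N x) - v" using assms unfolding right_module_def
      by (simp add: ennreal_minus_mono)
    also have "\<dots> \<le> A x y + (N x - v)" by (rule ennreal_sub_aux)
    finally show ?thesis using False by simp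
  qed simp
qed

lemma flat_adj:
  assumes g: "gms A" and s: "symmetric_gms A" and f: "P2_flat A M"
  shows "left_adjoint_module A M"
proof -
  have lm: "left_module A M" using f unfolding P2_flat_def by blast
  have F2: "\<And>S. finite S \<Longrightarrow> (\<forall>N\<in>S. right_module A N) \<Longrightarrow>
        (INF x. M x + (SUP N\<in>S. N x)) = (SUP N\<in>S. INF x. M x + N x)"
    using f unfolding P2_flat_def by blast
  have F3: "\<And>v N. right_module A N \<Longrightarrow>
        (INF x. M x + ihom v (N x)) = ihom v (INF x. M x + N x)"
    using f unfolding P2_flat_def by blast
  have rm: "right_module A M" using lm s unfolding left_module_def right_module_def symmetric_gms_def
    by (metis add.commute)
  have "(INF x. M x + (SUP N\<in>{}. N x)) = (SUP N\<in>{}. INF x. M x + N x)" by (rule F2) auto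
  then have inf0: "(INF x. M x) = 0" by (simp add: bot_ennreal)
  have inf2: "(INF x. M x + M x) = 0"
  proof (rule eps_zero)
    fix e :: real assume e: "0 < e"
    have "(INF x. M x) < ennreal (e/2)" using inf0 e by simp
    then obtain z where z: "M z < ennreal (e/2)" by (auto simp: INF_less_iff)
    have "(INF x. M x + M x) \<le> M z + M z" by (rule INF_lower) simp
    also have "\<dots> \<le> ennreal (e/2) + ennreal (e/2)" using z by (intro add_mono) auto
    finally show "(INF x. M x + M x) \<le> ennreal e" using half_sum[OF e] by simp
  qed
  have Minf: "(INF x. M x + A x c) = M c" for c
  proof (rule antisym)
    have "A c c = 0" using g unfolding gms_def by blast
    then show "(INF x. M x + A x c) \<le> M c"
      using INF_lower[of c UNIV "\<lambda>x. M x + A x c"] by simp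
    show "M c \<le> (INF x. M x + A x c)"
    proof (rule INF_greatest)
      fix x
      have "M c \<le> M x + A c x" using lm unfolding left_module_def by blast
      then show "M c \<le> M x + A x c" using s unfolding symmetric_gms_def by metis
    qed
  qed
  have tri: "A a b \<le> M a + M b" for a b
  proof (cases "M a = \<infinity> \<or> M b = \<infinity>")
    case True then show ?thesis by auto
  next
    case False
    define N1 where "N1 = (\<lambda>x. ihom (M a) (A x a))"
    define N2 where "N2 = (\<lambda>x. ihom (M b) (A x b))"
    have r1: "right_module A N1" unfolding N1_def by (rule rm_ihom[OF rm_dist[OF g s]])
    have r2: "right_module A N2" unfolding N2_def by (rule rm_ihom[OF rm_dist[OF g s]])
    have z1: "(INF x. M x + N1 x) = 0"
      unfolding N1_def using F3[OF rm_dist[OF g s], of "M a" a] Minf[of a] False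
      by (simp add: ihom_def)
    have z2: "(INF x. M x + N2 x) = 0"
      unfolding N2_def using F3[OF rm_dist[OF g s], of "M b" b] Minf[of b] False
      by (simp add: ihom_def)
    have z: "(INF x. M x + sup (N1 x) (N2 x)) = 0"
      using F2[of "{N1,N2}"] r1 r2 z1 z2 by simp
    show ?thesis
    proof (rule ennreal_le_epsilon)
      fix e :: real assume e: "0 < e"
      have "(INF x. M x + sup (N1 x) (N2 x)) < ennreal (e/2)" using z e by simp
      then obtain x where x: "M x + sup (N1 x) (N2 x) < ennreal (e/2)" by (auto simp: INF_less_iff)
      then have "N1 x \<le> ennreal (e/2)" "N2 x \<le> ennreal (e/2)"
        by (meson add_increasing le_less_trans less_imp_le sup.cobounded1 sup.cobounded2 zero_le order.trans)+
      then have h1: "A x a \<le> M a + ennreal (e/2)" and h2: "A x b \<le> M b + ennreal (e/2)"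
        using False unfolding N1_def N2_def ihom_def by (auto simp: ennreal_minus_le_iff)
      have "A a b \<le> A a x + A x b" using g unfolding gms_def by blast
      also have "\<dots> = A x a + A x b" using s unfolding symmetric_gms_def by metis
      also have "\<dots> \<le> (M a + ennreal (e/2)) + (M b + ennreal (e/2))" using h1 h2 by (rule add_mono)
      also have "\<dots> = (M a + M b) + (ennreal (e/2) + ennreal (e/2))" by (simp add: ac_simps)
      finally show "A a b \<le> M a + M b + ennreal e" using half_sum[OF e] by simp
    qed
  qed
  have "adjoint_pair A M M" unfolding adjoint_pair_def using lm rm inf2 tri by blast
  then show ?thesis unfolding left_adjoint_module_def using lm by blast
qed



lemma d_le:
  assumes "F \<noteq> bot" "eventually (\<lambda>y. A x y \<le> c) F"
  shows "Mminus A F x \<le> c"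
  unfolding Mminus_def using Liminf_le[OF assms] .

lemma d_ev:
  assumes g: "gms A" and c: "gms_cauchy_filter A F" and d: "Mminus A F x \<le> ennreal r"
    and dl: "0 < \<delta>"
  shows "eventually (\<lambda>y. A x y \<le> ennreal r + ennreal \<delta>) F"
proof -
  obtain P where P: "eventually P F" "\<forall>x y. P x \<longrightarrow> P y \<longrightarrow> A x y \<le> ennreal (\<delta>/2)"
    using c dl unfolding cauchy_iff by (meson half_gt_zero)
  have "(INF y\<in>{y. P y}. A x y) \<le> Mminus A F x"
    unfolding Mminus_def Liminf_def using P(1) by (intro SUP_upper) auto
  also have "\<dots> < ennreal r + ennreal (\<delta>/2)"
  proof -
    have "ennreal r < ennreal r + ennreal (\<delta>/2)" using dl by simp
    with d show ?thesis by (rule le_less_trans)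
  qed
  finally obtain y0 where y0: "P y0" "A x y0 < ennreal r + ennreal (\<delta>/2)"
    by (auto simp: INF_less_iff)
  have "A x y \<le> ennreal r + ennreal \<delta>" if "P y" for y
  proof -
    have "A x y \<le> A x y0 + A y0 y" using g unfolding gms_def by blast
    also have "\<dots> \<le> (ennreal r + ennreal (\<delta>/2)) + ennreal (\<delta>/2)"
      using y0 P(2) that by (intro add_mono) auto
    also have "\<dots> = ennreal r + ennreal \<delta>" using half_sum[OF dl] by (simp add: ac_simps)
    finally show ?thesis .
  qed
  then show ?thesis by (rule eventually_mono[OF P(1)])
qed

lemma D_ev:
  assumes c: "gms_cauchy_filter A F" and e: "0 < e"
  shows "eventually (\<lambda>x. Mminus A F x \<le> ennreal e) F"
proof -
  have nb: "F \<noteq> bot" using c unfolding cauchy_iff by blast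
  obtain P where P: "eventually P F" "\<forall>x y. P x \<longrightarrow> P y \<longrightarrow> A x y \<le> ennreal e"
    using c e unfolding cauchy_iff by blast
  have "Mminus A F x \<le> ennreal e" if "P x" for x
    by (rule d_le[OF nb]) (rule eventually_mono[OF P(1)], use P that in auto)
  then show ?thesis by (rule eventually_mono[OF P(1)])
qed

lemma cauchy_wf:
  assumes c: "gms_cauchy_filter A F"
  shows "weakly_flat_filter A F"
proof -
  have nb: "F \<noteq> bot" using c unfolding cauchy_iff by blast
  have "Limsup F (Mminus A F) = 0"
    by (rule eps_zero, rule Limsup_bounded, rule D_ev[OF c])
  then show ?thesis using nb unfolding weakly_flat_filter_def by blast
qed

lemma closed_minimal:
  assumes g: "gms A" and s: "symmetric_gms A" and c: "gms_cauchy_filter A F"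
  shows "closed_filter A F \<longleftrightarrow> minimal_cauchy_filter A F"
proof
  assume cl: "closed_filter A F"
  show "minimal_cauchy_filter A F" unfolding minimal_cauchy_filter_def
  proof (intro conjI allI impI)
    show "gms_cauchy_filter A F" by fact
    fix H assume H: "gms_cauchy_filter A H \<and> F \<le> H"
    have "H \<le> F" unfolding le_filter_def
    proof (intro allI impI)
      fix P assume "eventually P F"
      then obtain e :: real where e: "e > 0" "{x. Mminus A F x \<le> ennreal e} \<subseteq> Collect P"
        using cl unfolding closed_filter_def by blast
      obtain Q where Q: "eventually Q H" "\<forall>x y. Q x \<longrightarrow> Q y \<longrightarrow> A x y \<le> ennreal e"
        using H e unfolding cauchy_iff by blast
      have QF: "eventually Q F" using Q(1) H unfolding le_filter_def by blast
      have nb: "F \<noteq> bot" using c unfolding cauchy_iff by blast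
      have "P x" if "Q x" for x
      proof -
        have "Mminus A F x \<le> ennreal e"
          by (rule d_le[OF nb]) (rule eventually_mono[OF QF], use Q that in auto)
        then show ?thesis using e by auto
      qed
      then show "eventually P H" by (rule eventually_mono[OF Q(1)])
    qed
    then show "H = F" using H by (simp add: antisym)
  qed
next
  assume m: "minimal_cauchy_filter A F"
  have nb: "F \<noteq> bot" using c unfolding cauchy_iff by blast
  define G where "G = (INF e\<in>{(0::real)<..}. principal {x. Mminus A F x \<le> ennreal e})"
  have evG: "eventually P G \<longleftrightarrow> (\<exists>e>0. \<forall>x. Mminus A F x \<le> ennreal e \<longrightarrow> P x)" for P
  proof -
    have "eventually P G \<longleftrightarrow> (\<exists>e\<in>{(0::real)<..}. eventually P (principal {x. Mminus A F x \<le> ennreal e}))"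
      unfolding G_def
    proof (rule eventually_INF_base)
      show "{(0::real)<..} \<noteq> {}" by auto
      fix a b :: real assume "a \<in> {0<..}" "b \<in> {0<..}"
      then show "\<exists>c\<in>{0<..}. principal {x. Mminus A F x \<le> ennreal c} \<le>
           inf (principal {x. Mminus A F x \<le> ennreal a}) (principal {x. Mminus A F x \<le> ennreal b})"
        by (intro bexI[of _ "min a b"]) (auto simp: inf_principal intro: order_trans[OF _ ennreal_leI])
    qed
    then show ?thesis by (auto simp: eventually_principal)
  qed
  have FG: "F \<le> G" unfolding le_filter_def
  proof (intro allI impI)
    fix P assume "eventually P G"
    then have "\<exists>e>0. \<forall>x. Mminus A F x \<le> ennreal e \<longrightarrow> P x" by (simp only: evG)
    then obtain e where e: "e > 0" "\<forall>x. Mminus A F x \<le> ennreal e \<longrightarrow> P x" by blast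
    show "eventually P F" by (rule eventually_mono[OF D_ev[OF c e(1)]]) (use e(2) in auto)
  qed
  have Gnb: "G \<noteq> bot"
  proof
    assume "G = bot"
    then have "eventually (\<lambda>_. False) G" by simp
    then have "\<exists>e>0. \<forall>x. Mminus A F x \<le> ennreal e \<longrightarrow> False" by (simp only: evG)
    then obtain e where e: "e > 0" "\<forall>x. Mminus A F x \<le> ennreal e \<longrightarrow> False" by blast
    show False using eventually_happens'[OF nb D_ev[OF c e(1)]] e(2) by blast
  qed
  have Gc: "gms_cauchy_filter A G" unfolding cauchy_iff
  proof (intro conjI allI impI)
    show "G \<noteq> bot" by fact
    fix e :: real assume e: "e > 0"
    define D where "D = (\<lambda>x. Mminus A F x \<le> ennreal (e/4))"
    have "eventually D G" unfolding evG D_def using e by (intro exI[of _ "e/4"]) auto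
    moreover have "\<forall>x z. D x \<longrightarrow> D z \<longrightarrow> A x z \<le> ennreal e"
    proof (intro allI impI)
      fix x z assume "D x" "D z"
      have "eventually (\<lambda>y. A x y \<le> ennreal (e/4) + ennreal (e/4)) F"
        using d_ev[OF g c _, of x "e/4" "e/4"] \<open>D x\<close> e unfolding D_def by simp
      moreover have "eventually (\<lambda>y. A z y \<le> ennreal (e/4) + ennreal (e/4)) F"
        using d_ev[OF g c _, of z "e/4" "e/4"] \<open>D z\<close> e unfolding D_def by simp
      ultimately obtain y where y: "A x y \<le> ennreal (e/4) + ennreal (e/4)" "A z y \<le> ennreal (e/4) + ennreal (e/4)"
        using eventually_happens'[OF nb] eventually_conj by blast
      have q: "ennreal (e/4) + ennreal (e/4) = ennreal (e/2)" using e by (simp flip: ennreal_plus)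
      have "A x z \<le> A x y + A y z" using g unfolding gms_def by blast
      also have "\<dots> = A x y + A z y" using s unfolding symmetric_gms_def by metis
      also have "\<dots> \<le> ennreal (e/2) + ennreal (e/2)" using y q by (intro add_mono) auto
      finally show "A x z \<le> ennreal e" using half_sum[OF e] by simp
    qed
    ultimately show "\<exists>P. eventually P G \<and> (\<forall>x y. P x \<longrightarrow> P y \<longrightarrow> A x y \<le> ennreal e)" by blast
  qed
  have GF: "G = F" using m Gc FG unfolding minimal_cauchy_filter_def by blast
  show "closed_filter A F" unfolding closed_filter_def
  proof (intro conjI allI impI)
    show "weakly_flat_filter A F" using cauchy_wf[OF c] .
    fix P assume "eventually P F"
    then have "eventually P G" using GF by simp
    then show "\<exists>\<epsilon>::real. \<epsilon> > 0 \<and> {x. Mminus A F x \<le> ennreal \<epsilon>} \<subseteq> Collect P"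
      unfolding evG by auto
  qed
qed

theorem mainTheorem17:
  fixes A :: "'a \<Rightarrow> 'a \<Rightarrow> ennreal"
  assumes "gms A" and "symmetric_gms A"
  shows "(\<forall>F. flat_filter A F \<longrightarrow> gms_cauchy_filter A F)
    \<and> (\<forall>F. gms_cauchy_filter A F \<longrightarrow>
          (\<lambda>x. Limsup F (\<lambda>y. A x y)) = (\<lambda>x. Limsup F (\<lambda>y. A y x)))
    \<and> (\<forall>M N. adjoint_pair A M N \<longrightarrow> M = N)
    \<and> (\<forall>M. P2_flat A M \<longrightarrow> left_adjoint_module A M)
    \<and> (\<forall>F. gms_cauchy_filter A F \<longrightarrow> (closed_filter A F \<longleftrightarrow> minimal_cauchy_filter A F))
    \<and> (\<forall>F G. flat_filter A F \<and> closed_filter A F \<and> flat_filter A G \<and> closed_filter A G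
          \<and> F \<le> G \<longrightarrow> F = G)"
proof (intro conjI allI impI)
  note g = assms(1) and sy = assms(2)
  show "\<And>F. flat_filter A F \<Longrightarrow> gms_cauchy_filter A F" by (rule flat_cauchy[OF g sy])
  show "\<And>F. (\<lambda>x. Limsup F (\<lambda>y. A x y)) = (\<lambda>x. Limsup F (\<lambda>y. A y x))"
  proof -
    fix F :: "'a filter"
    have "\<And>x y. A x y = A y x" using sy unfolding symmetric_gms_def by blast
    then show "(\<lambda>x. Limsup F (\<lambda>y. A x y)) = (\<lambda>x. Limsup F (\<lambda>y. A y x))" by simp
  qed
  show "\<And>M N. adjoint_pair A M N \<Longrightarrow> M = N" by (rule adj_eq[OF g sy])
  show "\<And>M. P2_flat A M \<Longrightarrow> left_adjoint_module A M" by (rule flat_adj[OF g sy])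
  show "\<And>F. gms_cauchy_filter A F \<Longrightarrow> closed_filter A F = minimal_cauchy_filter A F"
    by (rule closed_minimal[OF g sy])
  fix F G assume h: "flat_filter A F \<and> closed_filter A F \<and> flat_filter A G \<and> closed_filter A G \<and> F \<le> G"
  have cF: "gms_cauchy_filter A F" using h flat_cauchy[OF g sy] by blast
  have cG: "gms_cauchy_filter A G" using h flat_cauchy[OF g sy] by blast
  have "minimal_cauchy_filter A F" using closed_minimal[OF g sy cF] h by blast
  then have "G = F" using cG h unfolding minimal_cauchy_filter_def by blast
  then show "F = G" by simp
qed

end
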